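(* In the $\mathbf N$-agent system with dependence on marginal distributions described in the context, let $\{\boldsymbol\mu_t^{\mathbf N},\boldsymbol\nu_t^{\mathbf N}\}_{t\ge0}$ be the empirical joint state and action distributions induced by a policy $\boldsymbol\pi=\{\boldsymbol\pi_t\}_{t\ge0}$. Then for every $t\ge0$: (a) $\mathbb E|\boldsymbol\nu_t^{\mathbf N}[\mathcal U]-\nu^{\mathrm{MF}}(\boldsymbol\mu_t^{\mathbf N},\boldsymbol\pi_t)[\mathcal U]|_1\le\frac1{\sqrt{N_{\mathrm{pop}}}}\sqrt{|\mathcal U|}$; (b) $\mathbb E\Big|\frac1{N_{\mathrm{pop}}}\sum_{k\in[K]}\sum_{j=1}^{N_k}r_k(x_{j,k}^t,u_{j,k}^t,\boldsymbol\mu_t^{\mathbf N}[\mathcal X],\boldsymbol\nu_t^{\mathbf N}[\mathcal U])-\sum_{k\in[K]}r_k^{\mathrm{MF}}(\boldsymbol\mu_t^{\mathbf N},\boldsymbol\pi_t)\Big|\le\frac{C_R}{\sqrt{N_{\mathrm{pop}}}}\sqrt{|\mathcal U|}$; (c) $\mathbb E|\boldsymbol\mu_{t+1}^{\mathbf N}[\mathcal X]-P^{\mathrm{MF}}(\boldsymbol\mu_t^{\mathbf N},\boldsymbol\pi_t)[\mathcal X]|_1\le\frac{C_P}{\sqrt{N_{\mathrm{pop}}}}\sqrt{|\mathcal X||\mathcal U|}$, where $C_R=M_R+L_R$ and $C_P=2+L_P$.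
   Context: Fix $K\ge1$, $N_1,\dots,N_K\ge1$, $[K]=\{1,\dots,K\}$, $N_{\mathrm{pop}}=\sum_kN_k$, finite sets $\mathcal X,\mathcal U$, $\mathcal P(A)$ the probability distributions on $A$, $|\cdot|_1$ the $L_1$ norm, constants $M_R,L_R,L_P>0$. Agent $j\in[N_k]$ of class $k$ has state $x_{j,k}^t$ and action $u_{j,k}^t$; $\boldsymbol\mu_t^{\mathbf N}(x,k)=\frac1{N_{\mathrm{pop}}}\sum_{j=1}^{N_k}\mathbf 1(x_{j,k}^t=x)$, $\boldsymbol\nu_t^{\mathbf N}(u,k)=\frac1{N_{\mathrm{pop}}}\sum_{j=1}^{N_k}\mathbf 1(u_{j,k}^t=u)$; marginals $\boldsymbol\mu[\mathcal X](x)=\sum_k\boldsymbol\mu(x,k)$, $\boldsymbol\nu[\mathcal U](u)=\sum_k\boldsymbol\nu(u,k)$. For each $k$: $r_k:\mathcal X\times\mathcal U\times\mathcal P(\mathcal X)\times\mathcal P(\mathcal U)\to\mathbb R$, $P_k:\mathcal X\times\mathcal U\times\mathcal P(\mathcal X)\times\mathcal P(\mathcal U)\to\mathcal P(\mathcal X)$ with $|r_k|\le M_R$, $|r_k(x,u,\mu_1,\nu_1)-r_k(x,u,\mu_2,\nu_2)|\le L_R(|\mu_1-\mu_2|_1+|\nu_1-\nu_2|_1)$, $|P_k(x,u,\mu_1,\nu_1)-P_k(x,u,\mu_2,\nu_2)|_1\le L_P(|\mu_1-\mu_2|_1+|\nu_1-\nu_2|_1)$. A policy is $\boldsymbol\pi=\{\boldsymbol\pi_t\}_{t\ge0}$,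 $\boldsymbol\pi_t=(\pi_k^t)_k$, $\pi_k^t:\mathcal X\times\mathcal P(\mathcal X)\to\mathcal P(\mathcal U)$. Dynamics: conditioned on all states at time $t$, actions are independent across agents with $u_{j,k}^t\sim\pi_k^t(x_{j,k}^t,\boldsymbol\mu_t^{\mathbf N}[\mathcal X])$; conditioned on states and actions, next states are independent with $x_{j,k}^{t+1}\sim P_k(x_{j,k}^t,u_{j,k}^t,\boldsymbol\mu_t^{\mathbf N}[\mathcal X],\boldsymbol\nu_t^{\mathbf N}[\mathcal U])$. Mean-field operators: $\nu^{\mathrm{MF}}(\boldsymbol\mu,\boldsymbol\pi)(u,k)=\sum_x\pi_k(x,\boldsymbol\mu[\mathcal X])(u)\boldsymbol\mu(x,k)$; $P^{\mathrm{MF}}(\boldsymbol\mu,\boldsymbol\pi)(x',k)=\sum_{x,u}\boldsymbol\mu(x,k)\pi_k(x,\boldsymbol\mu[\mathcal X])(u)P_k(x,u,\boldsymbol\mu[\mathcal X],\nu^{\mathrm{MF}}(\boldsymbol\mu,\boldsymbol\pi)[\mathcal U])(x')$; $r_k^{\mathrm{MF}}(\boldsymbol\mu,\boldsymbol\pi)=\sum_{x,u}\boldsymbol\mu(x,k)\pi_k(x,\boldsymbol\mu[\mathcal X])(u)r_k(x,u,\boldsymbol\mu[\mathcal X],\nu^{\mathrm{MF}}(\boldsymbol\mu,\boldsymbol\pi)[\mathcal U])$. *)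

theory Defs
  imports "HOL-Probability.Product_PMF"
begin

text \<open>Classes are indexed by k in {0..<K} (0-based), agent j of class k by j in {0..<N k}. A joint configuration (of states or actions) is a function
  from agents to values. Distributions on a finite type are real-valued functions.\<close>

definition agents :: "nat \<Rightarrow> (nat \<Rightarrow> nat) \<Rightarrow> (nat \<times> nat) set" where
  "agents K N = {(k, j). k < K \<and> j < N k}"

definition Npop :: "nat \<Rightarrow> (nat \<Rightarrow> nat) \<Rightarrow> nat" where
  "Npop K N = (\<Sum>k<K. N k)"

definition emp :: "nat \<Rightarrow> (nat \<Rightarrow> nat) \<Rightarrow> (nat \<times> nat \<Rightarrow> 'a) \<Rightarrow> 'a \<Rightarrow> nat \<Rightarrow> real" where
  "emp K N s = (\<lambda>x k. real (card {j. j < N k \<and> s (k, j) = x}) / real (Npop K N))"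

definition marg :: "nat \<Rightarrow> ('a \<Rightarrow> nat \<Rightarrow> real) \<Rightarrow> 'a \<Rightarrow> real" where
  "marg K mu = (\<lambda>x. \<Sum>k<K. mu x k)"

definition l1 :: "('a::finite \<Rightarrow> real) \<Rightarrow> ('a \<Rightarrow> real) \<Rightarrow> real" where
  "l1 f g = (\<Sum>x\<in>UNIV. \<bar>f x - g x\<bar>)"

definition is_dist :: "('a::finite \<Rightarrow> real) \<Rightarrow> bool" where
  "is_dist f \<longleftrightarrow> (\<forall>x. 0 \<le> f x) \<and> sum f UNIV = 1"

text \<open>Mean-field operators; pol is a one-step policy (class, state, marginal state dist).\<close>
definition nuMF :: "nat \<Rightarrow> (nat \<Rightarrow> 'x::finite \<Rightarrow> ('x \<Rightarrow> real) \<Rightarrow> 'u pmf)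
    \<Rightarrow> ('x \<Rightarrow> nat \<Rightarrow> real) \<Rightarrow> 'u \<Rightarrow> nat \<Rightarrow> real" where
  "nuMF K pol mu = (\<lambda>u k. \<Sum>x\<in>UNIV. pmf (pol k x (marg K mu)) u * mu x k)"

definition PMF :: "nat \<Rightarrow> (nat \<Rightarrow> 'x::finite \<Rightarrow> 'u::finite \<Rightarrow> ('x \<Rightarrow> real) \<Rightarrow> ('u \<Rightarrow> real) \<Rightarrow> 'x pmf)
    \<Rightarrow> (nat \<Rightarrow> 'x \<Rightarrow> ('x \<Rightarrow> real) \<Rightarrow> 'u pmf)
    \<Rightarrow> ('x \<Rightarrow> nat \<Rightarrow> real) \<Rightarrow> 'x \<Rightarrow> nat \<Rightarrow> real" where
  "PMF K P pol mu = (\<lambda>x' k. \<Sum>x\<in>UNIV. \<Sum>u\<in>UNIV.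
      mu x k * pmf (pol k x (marg K mu)) u
        * pmf (P k x u (marg K mu) (marg K (nuMF K pol mu))) x')"

definition rMF :: "nat \<Rightarrow> (nat \<Rightarrow> 'x::finite \<Rightarrow> 'u::finite \<Rightarrow> ('x \<Rightarrow> real) \<Rightarrow> ('u \<Rightarrow> real) \<Rightarrow> real)
    \<Rightarrow> (nat \<Rightarrow> 'x \<Rightarrow> ('x \<Rightarrow> real) \<Rightarrow> 'u pmf)
    \<Rightarrow> ('x \<Rightarrow> nat \<Rightarrow> real) \<Rightarrow> nat \<Rightarrow> real" where
  "rMF K r pol mu k = (\<Sum>x\<in>UNIV. \<Sum>u\<in>UNIV.
      mu x k * pmf (pol k x (marg K mu)) u
        * r k x u (marg K mu) (marg K (nuMF K pol mu)))"

text \<open>Values outside the agent set are irrelevant (fixed to undefined).\<close>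
definition act_pmf :: "nat \<Rightarrow> (nat \<Rightarrow> nat) \<Rightarrow> (nat \<Rightarrow> nat \<Rightarrow> 'x \<Rightarrow> ('x \<Rightarrow> real) \<Rightarrow> 'u pmf)
    \<Rightarrow> nat \<Rightarrow> (nat \<times> nat \<Rightarrow> 'x) \<Rightarrow> (nat \<times> nat \<Rightarrow> 'u) pmf" where
  "act_pmf K N pol t s = Pi_pmf (agents K N) undefined
      (\<lambda>(k, j). pol t k (s (k, j)) (marg K (emp K N s)))"

definition next_pmf :: "nat \<Rightarrow> (nat \<Rightarrow> nat) \<Rightarrow> (nat \<Rightarrow> 'x \<Rightarrow> 'u \<Rightarrow> ('x \<Rightarrow> real) \<Rightarrow> ('u \<Rightarrow> real) \<Rightarrow> 'x pmf)
    \<Rightarrow> (nat \<times> nat \<Rightarrow> 'x) \<Rightarrow> (nat \<times> nat \<Rightarrow> 'u) \<Rightarrow> (nat \<times> nat \<Rightarrow> 'x) pmf" where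
  "next_pmf K N P s a = Pi_pmf (agents K N) undefined
      (\<lambda>(k, j). P k (s (k, j)) (a (k, j)) (marg K (emp K N s)) (marg K (emp K N a)))"

primrec state_pmf :: "nat \<Rightarrow> (nat \<Rightarrow> nat) \<Rightarrow> (nat \<Rightarrow> 'x \<Rightarrow> 'u \<Rightarrow> ('x \<Rightarrow> real) \<Rightarrow> ('u \<Rightarrow> real) \<Rightarrow> 'x pmf)
    \<Rightarrow> (nat \<Rightarrow> nat \<Rightarrow> 'x \<Rightarrow> ('x \<Rightarrow> real) \<Rightarrow> 'u pmf) \<Rightarrow> (nat \<times> nat \<Rightarrow> 'x) pmf
    \<Rightarrow> nat \<Rightarrow> (nat \<times> nat \<Rightarrow> 'x) pmf" where
  "state_pmf K N P pol init 0 = init"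
| "state_pmf K N P pol init (Suc t) =
     bind_pmf (state_pmf K N P pol init t)
       (\<lambda>s. bind_pmf (act_pmf K N pol t s) (\<lambda>a. next_pmf K N P s a))"

definition joint_pmf :: "nat \<Rightarrow> (nat \<Rightarrow> nat) \<Rightarrow> (nat \<Rightarrow> 'x \<Rightarrow> 'u \<Rightarrow> ('x \<Rightarrow> real) \<Rightarrow> ('u \<Rightarrow> real) \<Rightarrow> 'x pmf)
    \<Rightarrow> (nat \<Rightarrow> nat \<Rightarrow> 'x \<Rightarrow> ('x \<Rightarrow> real) \<Rightarrow> 'u pmf) \<Rightarrow> (nat \<times> nat \<Rightarrow> 'x) pmf
    \<Rightarrow> nat \<Rightarrow> ((nat \<times> nat \<Rightarrow> 'x) \<times> (nat \<times> nat \<Rightarrow> 'u) \<times> (nat \<times> nat \<Rightarrow> 'x)) pmf" where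
  "joint_pmf K N P pol init t =
     bind_pmf (state_pmf K N P pol init t)
       (\<lambda>s. bind_pmf (act_pmf K N pol t s)
         (\<lambda>a. map_pmf (\<lambda>s'. (s, a, s')) (next_pmf K N P s a)))"

end

theory Submission
  imports Defs
begin


lemma exp_bind_finite:
  fixes h :: "_ \<Rightarrow> real"
  assumes "finite (set_pmf M)" "\<And>x. x \<in> set_pmf M \<Longrightarrow> finite (set_pmf (N x))"
  shows "measure_pmf.expectation (bind_pmf M N) h = measure_pmf.expectation M (\<lambda>x. measure_pmf.expectation (N x) h)"
proof -
  have "measure_pmf.expectation (bind_pmf M N) h = (\<Sum>a\<in>set_pmf M. pmf M a *\<^sub>R measure_pmf.expectation (N a) h)"
    by (rule pmf_expectation_bind) (use assms in auto)
  also have "\<dots> = measure_pmf.expectation M (\<lambda>x. measure_pmf.expectation (N x) h)"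
    by (subst integral_measure_pmf[OF assms(1)]) auto
  finally show ?thesis .
qed

lemma exp_pair_finite:
  fixes h :: "_ \<Rightarrow> real"
  assumes "finite (set_pmf A)" "finite (set_pmf B)"
  shows "measure_pmf.expectation (pair_pmf A B) h = measure_pmf.expectation A (\<lambda>a. measure_pmf.expectation B (\<lambda>b. h (a, b)))"
  unfolding pair_pmf_def using assms
  by (simp add: exp_bind_finite)

lemma exp_bind_le:
  fixes g :: "_ \<Rightarrow> real"
  assumes nn: "\<And>y. 0 \<le> g y"
    and int: "\<And>x. x \<in> set_pmf M \<Longrightarrow> integrable (measure_pmf (N x)) g"
    and le: "\<And>x. x \<in> set_pmf M \<Longrightarrow> measure_pmf.expectation (N x) g \<le> c"
  shows "measure_pmf.expectation (bind_pmf M N) g \<le> c"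
proof -
  obtain x0 where x0: "x0 \<in> set_pmf M" by (meson ex_in_conv set_pmf_not_empty)
  have "0 \<le> measure_pmf.expectation (N x0) g" by (rule Bochner_Integration.integral_nonneg) (simp add: nn)
  then have c0: "0 \<le> c" using le[OF x0] by linarith
  have "(\<integral>\<^sup>+y. ennreal (g y) \<partial>bind_pmf M N) = (\<integral>\<^sup>+x. \<integral>\<^sup>+y. ennreal (g y) \<partial>N x \<partial>M)"
    by simp
  also have "\<dots> \<le> (\<integral>\<^sup>+x. ennreal c \<partial>M)"
  proof (rule nn_integral_mono_AE, rule AE_pmfI)
    fix x assume x: "x \<in> set_pmf M"
    have "(\<integral>\<^sup>+y. ennreal (g y) \<partial>N x) = ennreal (measure_pmf.expectation (N x) g)"
      by (rule nn_integral_eq_integral) (use int[OF x] nn in auto)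
    also have "\<dots> \<le> ennreal c" using le[OF x] by (rule ennreal_leI)
    finally show "(\<integral>\<^sup>+y. ennreal (g y) \<partial>N x) \<le> ennreal c" .
  qed
  also have "\<dots> = ennreal c" by (simp add: measure_pmf.emeasure_space_1)
  finally have *: "(\<integral>\<^sup>+y. ennreal (g y) \<partial>bind_pmf M N) \<le> ennreal c" .
  have "measure_pmf.expectation (bind_pmf M N) g = enn2real (\<integral>\<^sup>+y. ennreal (g y) \<partial>bind_pmf M N)"
    by (rule integral_eq_nn_integral) (use nn in auto)
  also have "\<dots> \<le> enn2real (ennreal c)"
    by (rule enn2real_mono[OF *]) simp
  also have "\<dots> = c" using c0 by simp
  finally show ?thesis .
qed

lemma fin_Pi: "finite I \<Longrightarrow> finite (set_pmf (Pi_pmf I d (p :: _ \<Rightarrow> 'b::finite pmf)))"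
  by (subst set_Pi_pmf) (auto intro!: finite_PiE_dflt)

lemma fin_pmf: "finite (set_pmf (p :: 'b::finite pmf))"
  by (rule finite_subset[of _ UNIV]) auto

lemma int_fin: "finite (set_pmf M) \<Longrightarrow> integrable (measure_pmf M) (f :: _ \<Rightarrow> real)"
  by (rule integrable_measure_pmf_finite)

lemma var_Pi:
  fixes g :: "'i \<Rightarrow> 'b::finite \<Rightarrow> real"
  assumes "finite I" "\<And>i. i \<in> I \<Longrightarrow> measure_pmf.expectation (p i) (g i) = 0"
  shows "measure_pmf.expectation (Pi_pmf I d p) (\<lambda>\<omega>. (\<Sum>i\<in>I. g i (\<omega> i))\<^sup>2)
       = (\<Sum>i\<in>I. measure_pmf.expectation (p i) (\<lambda>b. (g i b)\<^sup>2))"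
  using assms
proof (induction I rule: finite_induct)
  case empty
  then show ?case by simp
next
  case (insert x F)
  let ?B = "Pi_pmf F d p"
  let ?S = "\<lambda>f. \<Sum>i\<in>F. g i (f i)"
  have finB: "finite (set_pmf ?B)" using insert fin_Pi by blast
  have ES: "measure_pmf.expectation ?B ?S = 0"
  proof -
    have "measure_pmf.expectation ?B ?S = (\<Sum>i\<in>F. measure_pmf.expectation ?B (\<lambda>f. g i (f i)))"
      by (subst Bochner_Integration.integral_sum) (use finB int_fin in auto)
    also have "\<dots> = (\<Sum>i\<in>F. measure_pmf.expectation (map_pmf (\<lambda>f. f i) ?B) (g i))"
      by simp
    also have "\<dots> = (\<Sum>i\<in>F. measure_pmf.expectation (p i) (g i))"
      by (intro sum.cong refl) (simp add: Pi_pmf_component insert.hyps)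
    also have "\<dots> = 0" using insert by simp
    finally show ?thesis .
  qed
  have IH: "measure_pmf.expectation ?B (\<lambda>f. (?S f)\<^sup>2) = (\<Sum>i\<in>F. measure_pmf.expectation (p i) (\<lambda>b. (g i b)\<^sup>2))"
    using insert by simp
  have eq: "(\<Sum>i\<in>insert x F. g i ((f(x := y)) i)) = g x y + ?S f" for f y
  proof -
    have "(\<Sum>i\<in>insert x F. g i ((f(x := y)) i)) = g x y + (\<Sum>i\<in>F. g i ((f(x := y)) i))"
      using insert.hyps by simp
    also have "(\<Sum>i\<in>F. g i ((f(x := y)) i)) = ?S f"
      by (intro sum.cong refl) (use insert.hyps in auto)
    finally show ?thesis .
  qed
  have inner: "measure_pmf.expectation ?B (\<lambda>f. (g x y + ?S f)\<^sup>2)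
      = (g x y)\<^sup>2 + (\<Sum>i\<in>F. measure_pmf.expectation (p i) (\<lambda>b. (g i b)\<^sup>2))" for y
  proof -
    have "measure_pmf.expectation ?B (\<lambda>f. (g x y + ?S f)\<^sup>2)
        = measure_pmf.expectation ?B (\<lambda>f. (g x y)\<^sup>2 + (2 * g x y * ?S f + (?S f)\<^sup>2))"
      by (simp add: power2_eq_square algebra_simps)
    also have "\<dots> = (g x y)\<^sup>2 + (2 * g x y * measure_pmf.expectation ?B ?S + measure_pmf.expectation ?B (\<lambda>f. (?S f)\<^sup>2))"
      using finB by (simp add: int_fin)
    also have "\<dots> = (g x y)\<^sup>2 + (\<Sum>i\<in>F. measure_pmf.expectation (p i) (\<lambda>b. (g i b)\<^sup>2))"
      using ES IH by simp
    finally show ?thesis .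
  qed
  have "measure_pmf.expectation (Pi_pmf (insert x F) d p) (\<lambda>\<omega>. (\<Sum>i\<in>insert x F. g i (\<omega> i))\<^sup>2)
      = measure_pmf.expectation (pair_pmf (p x) ?B) (\<lambda>(y, f). (\<Sum>i\<in>insert x F. g i ((f(x := y)) i))\<^sup>2)"
    by (simp add: Pi_pmf_insert insert.hyps case_prod_unfold)
  also have "\<dots> = measure_pmf.expectation (p x) (\<lambda>y. measure_pmf.expectation ?B (\<lambda>f. (g x y + ?S f)\<^sup>2))"
    by (subst exp_pair_finite) (use finB fin_pmf eq in auto)
  also have "\<dots> = measure_pmf.expectation (p x) (\<lambda>y. (g x y)\<^sup>2 + (\<Sum>i\<in>F. measure_pmf.expectation (p i) (\<lambda>b. (g i b)\<^sup>2)))"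
    by (simp add: inner)
  also have "\<dots> = (\<Sum>i\<in>insert x F. measure_pmf.expectation (p i) (\<lambda>b. (g i b)\<^sup>2))"
    using insert.hyps by (simp add: int_fin fin_pmf)
  finally show ?case .
qed



lemma abs_le_sqrt_sq:
  fixes Z :: "_ \<Rightarrow> real"
  assumes "finite (set_pmf M)"
  shows "measure_pmf.expectation M (\<lambda>w. \<bar>Z w\<bar>) \<le> sqrt (measure_pmf.expectation M (\<lambda>w. (Z w)\<^sup>2))"
proof -
  define e where "e = measure_pmf.expectation M (\<lambda>w. \<bar>Z w\<bar>)"
  have e0: "0 \<le> e" unfolding e_def by (rule Bochner_Integration.integral_nonneg) simp
  have "0 \<le> measure_pmf.expectation M (\<lambda>w. (\<bar>Z w\<bar> - e)\<^sup>2)"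
    by (rule Bochner_Integration.integral_nonneg) simp
  also have "measure_pmf.expectation M (\<lambda>w. (\<bar>Z w\<bar> - e)\<^sup>2)
      = measure_pmf.expectation M (\<lambda>w. (Z w)\<^sup>2 - 2 * e * \<bar>Z w\<bar> + e\<^sup>2)"
    by (intro Bochner_Integration.integral_cong refl) (simp add: power2_eq_square algebra_simps)
  also have "\<dots> = measure_pmf.expectation M (\<lambda>w. (Z w)\<^sup>2) - 2 * e * e + e\<^sup>2"
    using assms by (simp add: int_fin e_def)
  finally have "e\<^sup>2 \<le> measure_pmf.expectation M (\<lambda>w. (Z w)\<^sup>2)"
    by (simp add: power2_eq_square)
  then have "sqrt (e\<^sup>2) \<le> sqrt (measure_pmf.expectation M (\<lambda>w. (Z w)\<^sup>2))"
    by (rule real_sqrt_le_mono)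
  then show ?thesis using e0 by (simp add: e_def)
qed

lemma S2:
  fixes f :: "'i \<Rightarrow> 'b::finite \<Rightarrow> real"
  assumes "finite I"
  shows "measure_pmf.expectation (Pi_pmf I d p)
      (\<lambda>\<omega>. \<bar>\<Sum>i\<in>I. (f i (\<omega> i) - measure_pmf.expectation (p i) (f i))\<bar>)
    \<le> sqrt (\<Sum>i\<in>I. measure_pmf.expectation (p i) (\<lambda>b. (f i b)\<^sup>2))"
proof -
  define g where "g i b = f i b - measure_pmf.expectation (p i) (f i)" for i b
  have Eg: "measure_pmf.expectation (p i) (g i) = 0" for i
    unfolding g_def by (simp add: int_fin fin_pmf)
  have Eg2: "measure_pmf.expectation (p i) (\<lambda>b. (g i b)\<^sup>2) \<le> measure_pmf.expectation (p i) (\<lambda>b. (f i b)\<^sup>2)" for i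
  proof -
    define m where "m = measure_pmf.expectation (p i) (f i)"
    have "measure_pmf.expectation (p i) (\<lambda>b. (g i b)\<^sup>2)
        = measure_pmf.expectation (p i) (\<lambda>b. (f i b)\<^sup>2 - 2 * m * f i b + m\<^sup>2)"
      unfolding g_def m_def[symmetric]
      by (intro Bochner_Integration.integral_cong refl) (simp add: power2_eq_square algebra_simps)
    also have "\<dots> = measure_pmf.expectation (p i) (\<lambda>b. (f i b)\<^sup>2) - 2 * m * m + m\<^sup>2"
      by (simp add: int_fin fin_pmf m_def)
    also have "\<dots> \<le> measure_pmf.expectation (p i) (\<lambda>b. (f i b)\<^sup>2)"
      by (simp add: power2_eq_square)
    finally show ?thesis .
  qed
  have "measure_pmf.expectation (Pi_pmf I d p)
      (\<lambda>\<omega>. \<bar>\<Sum>i\<in>I. (f i (\<omega> i) - measure_pmf.expectation (p i) (f i))\<bar>)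
     = measure_pmf.expectation (Pi_pmf I d p) (\<lambda>\<omega>. \<bar>\<Sum>i\<in>I. g i (\<omega> i)\<bar>)"
    by (simp add: g_def)
  also have "\<dots> \<le> sqrt (measure_pmf.expectation (Pi_pmf I d p) (\<lambda>\<omega>. (\<Sum>i\<in>I. g i (\<omega> i))\<^sup>2))"
    by (rule abs_le_sqrt_sq) (rule fin_Pi[OF assms])
  also have "\<dots> = sqrt (\<Sum>i\<in>I. measure_pmf.expectation (p i) (\<lambda>b. (g i b)\<^sup>2))"
    by (subst var_Pi) (use assms Eg in auto)
  also have "\<dots> \<le> sqrt (\<Sum>i\<in>I. measure_pmf.expectation (p i) (\<lambda>b. (f i b)\<^sup>2))"
    by (intro real_sqrt_le_mono sum_mono Eg2)
  finally show ?thesis .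
qed

lemma sq_sum_le:
  fixes a :: "'c \<Rightarrow> real"
  assumes "finite C"
  shows "(\<Sum>c\<in>C. a c)\<^sup>2 \<le> real (card C) * (\<Sum>c\<in>C. (a c)\<^sup>2)"
proof -
  have "0 \<le> (\<Sum>c\<in>C. \<Sum>d\<in>C. (a c - a d)\<^sup>2)" by (intro sum_nonneg) auto
  also have "(\<Sum>c\<in>C. \<Sum>d\<in>C. (a c - a d)\<^sup>2) = (\<Sum>c\<in>C. \<Sum>d\<in>C. ((a c)\<^sup>2 + (a d)\<^sup>2 - 2 * (a c * a d)))"
    by (intro sum.cong refl) (simp add: power2_eq_square algebra_simps)
  also have "\<dots> = 2 * real (card C) * (\<Sum>c\<in>C. (a c)\<^sup>2) - 2 * (\<Sum>c\<in>C. a c)\<^sup>2"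
  proof -
    define S where "S = (\<Sum>c\<in>C. a c)"
    define S2 where "S2 = (\<Sum>c\<in>C. (a c)\<^sup>2)"
    have inner: "(\<Sum>d\<in>C. ((a c)\<^sup>2 + (a d)\<^sup>2 - 2 * (a c * a d))) = real (card C) * (a c)\<^sup>2 + S2 - 2 * a c * S" for c
      unfolding S_def S2_def by (simp add: sum_subtractf sum.distrib sum_distrib_left mult.assoc)
    have "(\<Sum>c\<in>C. real (card C) * (a c)\<^sup>2 + S2 - 2 * a c * S) = real (card C) * S2 + real (card C) * S2 - 2 * S * S"
      unfolding sum_subtractf sum.distrib
      using sum.swap[of "\<lambda>c d. 2 * (a c * a d)" C C]
      by (simp add: S_def S2_def sum_distrib_left sum_distrib_right mult.assoc)
    then show ?thesis using inner by (simp add: S_def S2_def power2_eq_square)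
  qed
  finally show ?thesis by simp
qed

lemma sum_sqrt_le:
  fixes V :: "'c \<Rightarrow> real"
  assumes "finite C" "\<And>c. 0 \<le> V c"
  shows "(\<Sum>c\<in>C. sqrt (V c)) \<le> sqrt (real (card C) * (\<Sum>c\<in>C. V c))"
proof -
  have "(\<Sum>c\<in>C. sqrt (V c))\<^sup>2 \<le> real (card C) * (\<Sum>c\<in>C. (sqrt (V c))\<^sup>2)"
    by (rule sq_sum_le[OF assms(1)])
  also have "\<dots> = real (card C) * (\<Sum>c\<in>C. V c)" using assms(2) by simp
  finally have "sqrt ((\<Sum>c\<in>C. sqrt (V c))\<^sup>2) \<le> sqrt (real (card C) * (\<Sum>c\<in>C. V c))"
    by (rule real_sqrt_le_mono)
  moreover have "0 \<le> (\<Sum>c\<in>C. sqrt (V c))" using assms(2) by (intro sum_nonneg) auto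
  ultimately show ?thesis by simp
qed

lemma G:
  fixes f :: "'i \<Rightarrow> 'b::finite \<Rightarrow> 'c::finite \<Rightarrow> real"
  assumes "finite I" "\<And>i b. i \<in> I \<Longrightarrow> (\<Sum>c\<in>UNIV. (f i b c)\<^sup>2) \<le> B"
  shows "measure_pmf.expectation (Pi_pmf I d p)
      (\<lambda>\<omega>. \<Sum>c\<in>UNIV. \<bar>\<Sum>i\<in>I. (f i (\<omega> i) c - measure_pmf.expectation (p i) (\<lambda>b. f i b c))\<bar>)
    \<le> sqrt (real CARD('c) * (real (card I) * B))"
proof -
  define V where "V c = (\<Sum>i\<in>I. measure_pmf.expectation (p i) (\<lambda>b. (f i b c)\<^sup>2))" for c
  have V0: "0 \<le> V c" for c unfolding V_def
    by (intro sum_nonneg Bochner_Integration.integral_nonneg) auto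
  have "measure_pmf.expectation (Pi_pmf I d p)
      (\<lambda>\<omega>. \<Sum>c\<in>UNIV. \<bar>\<Sum>i\<in>I. (f i (\<omega> i) c - measure_pmf.expectation (p i) (\<lambda>b. f i b c))\<bar>)
    = (\<Sum>c\<in>UNIV. measure_pmf.expectation (Pi_pmf I d p)
      (\<lambda>\<omega>. \<bar>\<Sum>i\<in>I. (f i (\<omega> i) c - measure_pmf.expectation (p i) (\<lambda>b. f i b c))\<bar>))"
    by (subst Bochner_Integration.integral_sum) (use fin_Pi[OF assms(1)] int_fin in auto)
  also have "\<dots> \<le> (\<Sum>c\<in>UNIV. sqrt (V c))"
    unfolding V_def by (intro sum_mono S2[OF assms(1)])
  also have "\<dots> \<le> sqrt (real CARD('c) * (\<Sum>c\<in>UNIV. V c))"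
    by (rule sum_sqrt_le) (use V0 in auto)
  also have "(\<Sum>c\<in>UNIV. V c) = (\<Sum>i\<in>I. measure_pmf.expectation (p i) (\<lambda>b. \<Sum>c\<in>UNIV. (f i b c)\<^sup>2))"
    unfolding V_def by (subst sum.swap) (simp add: int_fin fin_pmf)
  also have "\<dots> \<le> (\<Sum>i\<in>I. B)"
  proof (intro sum_mono)
    fix i assume i: "i \<in> I"
    have "measure_pmf.expectation (p i) (\<lambda>b. \<Sum>c\<in>UNIV. (f i b c)\<^sup>2) \<le> measure_pmf.expectation (p i) (\<lambda>b. B)"
      by (rule Bochner_Integration.integral_mono) (use assms(2)[OF i] in \<open>auto simp: int_fin fin_pmf\<close>)
    then show "measure_pmf.expectation (p i) (\<lambda>b. \<Sum>c\<in>UNIV. (f i b c)\<^sup>2) \<le> B" by simp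
  qed
  finally show ?thesis by (simp add: mult_left_mono)
qed



lemma agents_Sigma: "agents K N = Sigma {..<K} (\<lambda>k. {..<N k})"
  by (auto simp: agents_def)

lemma fin_agents: "finite (agents K N)"
  by (simp add: agents_Sigma)

lemma card_agents: "card (agents K N) = Npop K N"
  by (simp add: agents_Sigma Npop_def card_SigmaI)

lemma sum_agents: "(\<Sum>i\<in>agents K N. h i) = (\<Sum>k<K. \<Sum>j<N k. h (k, j))"
  by (simp add: agents_Sigma sum.Sigma)

lemma card_eq_sum_bool: "real (card {j. j < (M::nat) \<and> h j = x}) = (\<Sum>j<M. if h j = x then 1 else 0)"
proof -
  have "{j. j < M \<and> h j = x} = {j\<in>{..<M}. h j = x}" by auto
  then have "real (card {j. j < M \<and> h j = x}) = (\<Sum>j\<in>{j\<in>{..<M}. h j = x}. 1)" by simp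
  also have "\<dots> = (\<Sum>j<M. if h j = x then 1 else 0)" using sum.inter_filter[of "{..<M}" "\<lambda>_. (1::real)" "\<lambda>j. h j = x"] by simp
  finally show ?thesis .
qed

lemma marg_apply: "marg K mu x = (\<Sum>k<K. mu x k)"
  by (simp add: marg_def)

lemma sum_by_value:
  fixes h :: "nat \<Rightarrow> 'x::finite"
  shows "(\<Sum>x\<in>UNIV. c x * real (card {j. j < M \<and> h j = x})) = (\<Sum>j<M. c (h j))"
proof -
  have "(\<Sum>x\<in>UNIV. c x * real (card {j. j < M \<and> h j = x})) = (\<Sum>x\<in>UNIV. \<Sum>j<M. if h j = x then c x else 0)"
    by (simp add: card_eq_sum_bool sum_distrib_left if_distrib cong: if_cong)
  also have "\<dots> = (\<Sum>j<M. \<Sum>x\<in>UNIV. if h j = x then c x else 0)"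
    by (rule sum.swap)
  also have "\<dots> = (\<Sum>j<M. c (h j))" by simp
  finally show ?thesis .
qed

lemma emp_sum:
  fixes s :: "nat \<times> nat \<Rightarrow> 'x::finite"
  shows "(\<Sum>k<K. \<Sum>x\<in>UNIV. emp K N s x k * G k x) = (\<Sum>i\<in>agents K N. G (fst i) (s i)) / real (Npop K N)"
proof -
  have "(\<Sum>x\<in>UNIV. emp K N s x k * G k x) = (\<Sum>j<N k. G k (s (k, j))) / real (Npop K N)" for k
  proof -
    have "(\<Sum>x\<in>UNIV. emp K N s x k * G k x) = (\<Sum>x\<in>UNIV. G k x * real (card {j. j < N k \<and> s (k, j) = x})) / real (Npop K N)"
      by (simp add: emp_def sum_divide_distrib mult.commute)
    also have "\<dots> = (\<Sum>j<N k. G k (s (k, j))) / real (Npop K N)"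
      by (subst sum_by_value[where h = "\<lambda>j. s (k, j)"]) simp
    finally show ?thesis .
  qed
  then show ?thesis by (simp add: sum_agents sum_divide_distrib)
qed

lemma marg_emp:
  fixes a :: "nat \<times> nat \<Rightarrow> 'u::finite"
  shows "marg K (emp K N a) u = (\<Sum>i\<in>agents K N. if a i = u then 1 else 0) / real (Npop K N)"
proof -
  have "marg K (emp K N a) u = (\<Sum>k<K. \<Sum>x\<in>UNIV. emp K N a x k * (if x = u then 1 else 0))"
    by (simp add: marg_def if_distrib cong: if_cong)
  also have "\<dots> = (\<Sum>i\<in>agents K N. if a i = u then 1 else 0) / real (Npop K N)"
    by (subst emp_sum) simp
  finally show ?thesis .
qed

lemma marg_nuMF:
  fixes s :: "nat \<times> nat \<Rightarrow> 'x::finite"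
  shows "marg K (nuMF K pl (emp K N s)) u =
    (\<Sum>i\<in>agents K N. pmf (pl (fst i) (s i) (marg K (emp K N s))) u) / real (Npop K N)"
  unfolding marg_apply[of K "nuMF K pl (emp K N s)"] unfolding nuMF_def
  by (subst emp_sum[symmetric]) (simp add: mult.commute)

lemma marg_PMF:
  fixes s :: "nat \<times> nat \<Rightarrow> 'x::finite"
  shows "marg K (PMF K P pl (emp K N s)) x' =
    (\<Sum>i\<in>agents K N. \<Sum>u\<in>UNIV. pmf (pl (fst i) (s i) (marg K (emp K N s))) u
        * pmf (P (fst i) (s i) u (marg K (emp K N s)) (marg K (nuMF K pl (emp K N s)))) x') / real (Npop K N)"
  unfolding marg_apply[of K "PMF K P pl (emp K N s)"] unfolding PMF_def
  by (subst emp_sum[symmetric]) (simp add: sum_distrib_left mult.assoc)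

lemma sum_rMF:
  fixes s :: "nat \<times> nat \<Rightarrow> 'x::finite"
  shows "(\<Sum>k<K. rMF K r pl (emp K N s) k) =
    (\<Sum>i\<in>agents K N. \<Sum>u\<in>UNIV. pmf (pl (fst i) (s i) (marg K (emp K N s))) u
        * r (fst i) (s i) u (marg K (emp K N s)) (marg K (nuMF K pl (emp K N s)))) / real (Npop K N)"
  unfolding rMF_def
  by (subst emp_sum[symmetric]) (simp add: sum_distrib_left mult.assoc)

lemma dist_emp:
  fixes a :: "nat \<times> nat \<Rightarrow> 'u::finite"
  assumes "Npop K N > 0"
  shows "is_dist (marg K (emp K N a))"
proof -
  have "(\<Sum>u\<in>UNIV. marg K (emp K N a) u) = (\<Sum>u\<in>UNIV. \<Sum>i\<in>agents K N. if a i = u then 1 else 0) / real (Npop K N)"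
    by (simp add: marg_emp sum_divide_distrib)
  also have "(\<Sum>u\<in>UNIV. \<Sum>i\<in>agents K N. if a i = u then 1 else 0) = (\<Sum>i\<in>agents K N. \<Sum>u\<in>UNIV. if a i = u then (1::real) else 0)"
    by (rule sum.swap)
  also have "\<dots> = (\<Sum>i\<in>agents K N. (1::real))" by simp
  also have "\<dots> = real (Npop K N)" by (simp add: card_agents)
  finally show ?thesis unfolding is_dist_def using assms by (auto simp: marg_emp intro!: sum_nonneg divide_nonneg_nonneg)
qed

lemma dist_nuMF:
  fixes s :: "nat \<times> nat \<Rightarrow> 'x::finite"
  assumes "Npop K N > 0"
  shows "is_dist (marg K (nuMF K (pl :: nat \<Rightarrow> 'x \<Rightarrow> _ \<Rightarrow> 'u::finite pmf) (emp K N s)))"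
proof -
  have "(\<Sum>u\<in>UNIV. marg K (nuMF K pl (emp K N s)) u)
      = (\<Sum>i\<in>agents K N. \<Sum>u\<in>UNIV. pmf (pl (fst i) (s i) (marg K (emp K N s))) u) / real (Npop K N)"
    by (simp add: marg_nuMF sum_divide_distrib[symmetric] sum.swap[of _ UNIV])
  also have "\<dots> = 1" using assms by (simp add: card_agents sum_pmf_eq_1)
  finally show ?thesis unfolding is_dist_def by (auto simp: marg_nuMF intro!: sum_nonneg divide_nonneg_nonneg)
qed

lemma l1_triangle: "l1 f h \<le> l1 f g + l1 g h"
  unfolding l1_def sum.distrib[symmetric] by (intro sum_mono) linarith

lemma l1_self[simp]: "l1 f f = 0"
  by (simp add: l1_def)

lemma l1_nonneg: "0 \<le> l1 f g"
  unfolding l1_def by (intro sum_nonneg) auto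

lemma exp_ind: "measure_pmf.expectation q (\<lambda>b. if b = u then 1 else 0) = pmf q u"
  by (subst integral_measure_pmf_real[where A="{u}"]) (auto split: if_splits)

lemma exp_fin: "measure_pmf.expectation (q :: 'b::finite pmf) g = (\<Sum>b\<in>UNIV. pmf q b * g b)"
  by (subst integral_measure_pmf_real[where A=UNIV]) (auto simp: mult.commute)

lemma exp_const_test: "measure_pmf.expectation q (\<lambda>_. c) = (c::real)"
  by simp



lemma sqrt_alg: "0 < n \<Longrightarrow> sqrt (c * (n * 1)) / n = 1 / sqrt n * sqrt (c::real)"
  by (simp add: real_sqrt_mult field_simps)

lemma sum_ind_sq: "(\<Sum>u\<in>(UNIV::'b::finite set). (if b = u then (1::real) else 0)\<^sup>2) = 1"
proof -
  have "(\<Sum>u\<in>UNIV. (if b = u then (1::real) else 0)\<^sup>2) = (\<Sum>u\<in>UNIV. if b = u then 1 else 0)"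
    by (rule sum.cong) auto
  also have "\<dots> = 1" by simp
  finally show ?thesis .
qed

lemma Gl1:
  fixes f :: "'i \<Rightarrow> 'b::finite \<Rightarrow> 'c::finite \<Rightarrow> real"
  assumes I: "finite I" "card I > 0"
    and B: "\<And>i b. i \<in> I \<Longrightarrow> (\<Sum>c\<in>UNIV. (f i b c)\<^sup>2) \<le> 1"
  shows "measure_pmf.expectation (Pi_pmf I d p)
      (\<lambda>\<omega>. l1 (\<lambda>c. (\<Sum>i\<in>I. f i (\<omega> i) c) / real (card I))
               (\<lambda>c. (\<Sum>i\<in>I. measure_pmf.expectation (p i) (\<lambda>b. f i b c)) / real (card I)))
    \<le> 1 / sqrt (real (card I)) * sqrt (real CARD('c))"
proof -
  define n where "n = real (card I)"
  have n: "n > 0" using I by (simp add: n_def)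
  have pw: "l1 (\<lambda>c. (\<Sum>i\<in>I. f i (\<omega> i) c) / n) (\<lambda>c. (\<Sum>i\<in>I. measure_pmf.expectation (p i) (\<lambda>b. f i b c)) / n)
     = (\<Sum>c\<in>UNIV. \<bar>\<Sum>i\<in>I. (f i (\<omega> i) c - measure_pmf.expectation (p i) (\<lambda>b. f i b c))\<bar>) / n" for \<omega>
    unfolding l1_def using n
    by (simp add: sum_divide_distrib[symmetric] diff_divide_distrib[symmetric] sum_subtractf)
  have "measure_pmf.expectation (Pi_pmf I d p)
      (\<lambda>\<omega>. l1 (\<lambda>c. (\<Sum>i\<in>I. f i (\<omega> i) c) / n) (\<lambda>c. (\<Sum>i\<in>I. measure_pmf.expectation (p i) (\<lambda>b. f i b c)) / n))
    = measure_pmf.expectation (Pi_pmf I d p)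
      (\<lambda>\<omega>. \<Sum>c\<in>UNIV. \<bar>\<Sum>i\<in>I. (f i (\<omega> i) c - measure_pmf.expectation (p i) (\<lambda>b. f i b c))\<bar>) / n"
    unfolding pw by simp
  also have "\<dots> \<le> sqrt (real CARD('c) * (n * 1)) / n"
    using G[OF I(1) B, where d=d and p=p] n unfolding n_def by (intro divide_right_mono) auto
  also have "\<dots> = 1 / sqrt n * sqrt (real CARD('c))"
    by (rule sqrt_alg[OF n])
  finally show ?thesis unfolding n_def .
qed

lemma act_eq: "act_pmf K N pol t s = Pi_pmf (agents K N) undefined (\<lambda>i. pol t (fst i) (s i) (marg K (emp K N s)))"
  unfolding act_pmf_def by (simp add: case_prod_unfold)

lemma next_eq: "next_pmf K N P s a = Pi_pmf (agents K N) undefined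
    (\<lambda>i. P (fst i) (s i) (a i) (marg K (emp K N s)) (marg K (emp K N a)))"
  unfolding next_pmf_def by (simp add: case_prod_unfold)

lemma part_a:
  fixes s :: "nat \<times> nat \<Rightarrow> 'x::finite" and pol :: "nat \<Rightarrow> nat \<Rightarrow> 'x \<Rightarrow> ('x \<Rightarrow> real) \<Rightarrow> 'u::finite pmf"
  assumes n: "Npop K N > 0"
  shows "measure_pmf.expectation (act_pmf K N pol t s)
      (\<lambda>a. l1 (marg K (emp K N a)) (marg K (nuMF K (pol t) (emp K N s))))
    \<le> 1 / sqrt (real (Npop K N)) * sqrt (real CARD('u))"
proof -
  define p where "p i = pol t (fst i) (s i) (marg K (emp K N s))" for i
  have e1: "marg K (emp K N a) = (\<lambda>u. (\<Sum>i\<in>agents K N. (\<lambda>i b u. if b = u then 1 else 0) i (a i) u) / real (card (agents K N)))" for a :: "nat \<times> nat \<Rightarrow> 'u"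
    by (simp add: fun_eq_iff marg_emp card_agents)
  have e2: "marg K (nuMF K (pol t) (emp K N s)) = (\<lambda>u. (\<Sum>i\<in>agents K N. measure_pmf.expectation (p i) (\<lambda>b. (\<lambda>i b u. if b = u then 1 else 0) i b u)) / real (card (agents K N)))"
    by (simp add: fun_eq_iff marg_nuMF card_agents exp_ind p_def)
  show ?thesis
    unfolding act_eq p_def[symmetric] e1 e2 card_agents[symmetric]
    by (rule Gl1) (use n in \<open>auto simp: fin_agents card_agents sum_ind_sq\<close>)
qed

lemma fst_agents: "i \<in> agents K N \<Longrightarrow> fst i < K"
  by (auto simp: agents_def)

lemma part_b:
  fixes s :: "nat \<times> nat \<Rightarrow> 'x::finite" and pol :: "nat \<Rightarrow> nat \<Rightarrow> 'x \<Rightarrow> ('x \<Rightarrow> real) \<Rightarrow> 'u::finite pmf"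
    and r :: "nat \<Rightarrow> 'x \<Rightarrow> 'u \<Rightarrow> ('x \<Rightarrow> real) \<Rightarrow> ('u \<Rightarrow> real) \<Rightarrow> real"
  assumes n: "Npop K N > 0" and LR: "L_R > 0" and MR: "M_R > 0"
    and r_bound: "\<forall>k<K. \<forall>x u mu nu. is_dist mu \<longrightarrow> is_dist nu \<longrightarrow> \<bar>r k x u mu nu\<bar> \<le> M_R"
    and r_lip: "\<forall>k<K. \<forall>x u mu1 nu1 mu2 nu2.
        is_dist mu1 \<longrightarrow> is_dist nu1 \<longrightarrow> is_dist mu2 \<longrightarrow> is_dist nu2 \<longrightarrow>
        \<bar>r k x u mu1 nu1 - r k x u mu2 nu2\<bar> \<le> L_R * (l1 mu1 mu2 + l1 nu1 nu2)"
  shows "measure_pmf.expectation (act_pmf K N pol t s)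
      (\<lambda>a. \<bar>1 / real (Npop K N) *
            (\<Sum>(k, j)\<in>agents K N. r k (s (k, j)) (a (k, j)) (marg K (emp K N s)) (marg K (emp K N a)))
          - (\<Sum>k<K. rMF K r (pol t) (emp K N s) k)\<bar>)
    \<le> (M_R + L_R) / sqrt (real (Npop K N)) * sqrt (real CARD('u))"
proof -
  define A where "A = agents K N"
  define m where "m = marg K (emp K N s)"
  define nM where "nM = marg K (nuMF K (pol t) (emp K N s))"
  define p where "p i = pol t (fst i) (s i) m" for i
  define nn where "nn = real (Npop K N)"
  define g where "g i b = r (fst i) (s i) b m nM" for i b
  have nn: "nn > 0" using n by (simp add: nn_def)
  have cardA: "real (card A) = nn" by (simp add: A_def nn_def card_agents)
  have finA: "finite A" by (simp add: A_def fin_agents)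
  have dm: "is_dist m" unfolding m_def by (rule dist_emp[OF n])
  have dM: "is_dist nM" unfolding nM_def by (rule dist_nuMF[OF n])
  have de: "is_dist (marg K (emp K N a))" for a :: "nat \<times> nat \<Rightarrow> 'u" by (rule dist_emp[OF n])
  have fstA: "i \<in> A \<Longrightarrow> fst i < K" for i by (simp add: A_def fst_agents)
  have Y: "(\<Sum>k<K. rMF K r (pol t) (emp K N s) k) = (\<Sum>i\<in>A. measure_pmf.expectation (p i) (g i)) / nn"
    by (simp add: sum_rMF exp_fin p_def g_def A_def nn_def m_def nM_def)
  have X: "(\<Sum>(k, j)\<in>agents K N. r k (s (k, j)) (a (k, j)) m (marg K (emp K N a)))
      = (\<Sum>i\<in>A. r (fst i) (s i) (a i) m (marg K (emp K N a)))" for a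
    by (simp add: case_prod_unfold A_def)
  have pw: "\<bar>1 / nn * (\<Sum>(k, j)\<in>agents K N. r k (s (k, j)) (a (k, j)) m (marg K (emp K N a)))
          - (\<Sum>k<K. rMF K r (pol t) (emp K N s) k)\<bar>
      \<le> L_R * l1 (marg K (emp K N a)) nM + \<bar>\<Sum>i\<in>A. (g i (a i) - measure_pmf.expectation (p i) (g i))\<bar> / nn" for a
  proof -
    define D where "D = (\<Sum>i\<in>A. r (fst i) (s i) (a i) m (marg K (emp K N a)) - g i (a i))"
    define E where "E = (\<Sum>i\<in>A. (g i (a i) - measure_pmf.expectation (p i) (g i)))"
    have split: "1 / nn * (\<Sum>(k, j)\<in>agents K N. r k (s (k, j)) (a (k, j)) m (marg K (emp K N a)))
          - (\<Sum>k<K. rMF K r (pol t) (emp K N s) k) = D / nn + E / nn"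
      unfolding X Y D_def E_def using nn
      by (simp add: sum_subtractf field_simps)
    have "\<bar>D\<bar> \<le> (\<Sum>i\<in>A. \<bar>r (fst i) (s i) (a i) m (marg K (emp K N a)) - g i (a i)\<bar>)"
      unfolding D_def by (rule sum_abs)
    also have "\<dots> \<le> (\<Sum>i\<in>A. L_R * l1 (marg K (emp K N a)) nM)"
    proof (rule sum_mono)
      fix i assume i: "i \<in> A"
      have "\<bar>r (fst i) (s i) (a i) m (marg K (emp K N a)) - g i (a i)\<bar> \<le> L_R * (l1 m m + l1 (marg K (emp K N a)) nM)"
        unfolding g_def by (rule r_lip[rule_format, OF fstA[OF i] dm de dm dM])
      then show "\<bar>r (fst i) (s i) (a i) m (marg K (emp K N a)) - g i (a i)\<bar> \<le> L_R * l1 (marg K (emp K N a)) nM"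
        by simp
    qed
    also have "\<dots> = nn * (L_R * l1 (marg K (emp K N a)) nM)" using cardA by simp
    finally have "\<bar>D\<bar> / nn \<le> L_R * l1 (marg K (emp K N a)) nM" using nn by (simp add: field_simps)
    moreover have "\<bar>D / nn + E / nn\<bar> \<le> \<bar>D / nn\<bar> + \<bar>E / nn\<bar>" by (rule abs_triangle_ineq)
    moreover have "\<bar>D / nn\<bar> = \<bar>D\<bar> / nn" "\<bar>E / nn\<bar> = \<bar>E\<bar> / nn" using nn by simp_all
    ultimately show ?thesis unfolding split E_def[symmetric] by linarith
  qed
  have act: "act_pmf K N pol t s = Pi_pmf A undefined p"
    unfolding act_eq A_def p_def m_def ..
  have finP: "finite (set_pmf (Pi_pmf A undefined p))" by (rule fin_Pi[OF finA])
  have Eg2: "(\<Sum>i\<in>A. measure_pmf.expectation (p i) (\<lambda>b. (g i b)\<^sup>2)) \<le> nn * M_R\<^sup>2"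
  proof -
    have "(\<Sum>i\<in>A. measure_pmf.expectation (p i) (\<lambda>b. (g i b)\<^sup>2)) \<le> (\<Sum>i\<in>A. M_R\<^sup>2)"
    proof (rule sum_mono)
      fix i assume i: "i \<in> A"
      have "(g i b)\<^sup>2 \<le> M_R\<^sup>2" for b
      proof -
        have "\<bar>g i b\<bar> \<le> M_R" unfolding g_def by (rule r_bound[rule_format, OF fstA[OF i] dm dM])
        then have "\<bar>g i b\<bar> \<le> \<bar>M_R\<bar>" using MR by simp
        then show ?thesis by (simp only: abs_le_square_iff)
      qed
      then have "measure_pmf.expectation (p i) (\<lambda>b. (g i b)\<^sup>2) \<le> measure_pmf.expectation (p i) (\<lambda>b. M_R\<^sup>2)"
        by (intro Bochner_Integration.integral_mono) (auto simp: int_fin fin_pmf)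
      then show "measure_pmf.expectation (p i) (\<lambda>b. (g i b)\<^sup>2) \<le> M_R\<^sup>2" by simp
    qed
    also have "\<dots> = nn * M_R\<^sup>2" using cardA by simp
    finally show ?thesis .
  qed
  have EE: "measure_pmf.expectation (Pi_pmf A undefined p)
      (\<lambda>a. \<bar>\<Sum>i\<in>A. (g i (a i) - measure_pmf.expectation (p i) (g i))\<bar>) \<le> sqrt nn * M_R"
  proof -
    have "measure_pmf.expectation (Pi_pmf A undefined p)
      (\<lambda>a. \<bar>\<Sum>i\<in>A. (g i (a i) - measure_pmf.expectation (p i) (g i))\<bar>)
        \<le> sqrt (\<Sum>i\<in>A. measure_pmf.expectation (p i) (\<lambda>b. (g i b)\<^sup>2))"
      by (rule S2[OF finA])
    also have "\<dots> \<le> sqrt (nn * M_R\<^sup>2)" by (rule real_sqrt_le_mono[OF Eg2])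
    also have "\<dots> = sqrt nn * M_R" using MR by (simp add: real_sqrt_mult)
    finally show ?thesis .
  qed
  have EA: "measure_pmf.expectation (Pi_pmf A undefined p) (\<lambda>a. l1 (marg K (emp K N a)) nM)
      \<le> 1 / sqrt nn * sqrt (real CARD('u))"
    using part_a[OF n, of pol t s] unfolding act nM_def nn_def .
  have "measure_pmf.expectation (act_pmf K N pol t s)
      (\<lambda>a. \<bar>1 / real (Npop K N) *
            (\<Sum>(k, j)\<in>agents K N. r k (s (k, j)) (a (k, j)) (marg K (emp K N s)) (marg K (emp K N a)))
          - (\<Sum>k<K. rMF K r (pol t) (emp K N s) k)\<bar>)
    \<le> measure_pmf.expectation (Pi_pmf A undefined p)
       (\<lambda>a. L_R * l1 (marg K (emp K N a)) nM + \<bar>\<Sum>i\<in>A. (g i (a i) - measure_pmf.expectation (p i) (g i))\<bar> / nn)"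
    unfolding act m_def[symmetric] nn_def[symmetric]
    by (intro Bochner_Integration.integral_mono pw) (auto simp: int_fin finP)
  also have "\<dots> = L_R * measure_pmf.expectation (Pi_pmf A undefined p) (\<lambda>a. l1 (marg K (emp K N a)) nM)
      + measure_pmf.expectation (Pi_pmf A undefined p)
        (\<lambda>a. \<bar>\<Sum>i\<in>A. (g i (a i) - measure_pmf.expectation (p i) (g i))\<bar>) / nn"
    by (simp add: int_fin finP)
  also have "\<dots> \<le> L_R * (1 / sqrt nn * sqrt (real CARD('u))) + sqrt nn * M_R / nn"
    using EA EE nn LR by (intro add_mono mult_left_mono divide_right_mono) auto
  also have "\<dots> \<le> (M_R + L_R) / sqrt nn * sqrt (real CARD('u))"
  proof -
    have u1: "1 \<le> sqrt (real CARD('u))" by simp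
    have ss: "sqrt nn * sqrt nn = nn" using nn by simp
    have sp: "sqrt nn > 0" using nn by simp
    have "sqrt nn * M_R / nn = sqrt nn * M_R / (sqrt nn * sqrt nn)" by (simp only: ss)
    also have "\<dots> = M_R / sqrt nn"
    proof -
      have gen: "a * M_R / (a * a) = M_R / a" if "a > 0" for a :: real using that by (simp add: field_simps)
      show ?thesis by (rule gen[OF sp])
    qed
    finally have "sqrt nn * M_R / nn = M_R / sqrt nn" .
    also have "\<dots> \<le> M_R / sqrt nn * sqrt (real CARD('u))"
      using mult_left_mono[OF u1, of "M_R / sqrt nn"] MR nn by simp
    finally have le: "sqrt nn * M_R / nn \<le> M_R / sqrt nn * sqrt (real CARD('u))" .
    have eq: "L_R * (1 / sqrt nn * sqrt (real CARD('u))) + M_R / sqrt nn * sqrt (real CARD('u))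
        = (M_R + L_R) / sqrt nn * sqrt (real CARD('u))" by (simp add: field_simps add_divide_distrib)
    show ?thesis using le eq by linarith
  qed
  finally show ?thesis unfolding nn_def .
qed



lemma pmf_sq_sum: "(\<Sum>x\<in>UNIV. (pmf (q :: 'x::finite pmf) x)\<^sup>2) \<le> 1"
proof -
  have "(\<Sum>x\<in>UNIV. (pmf q x)\<^sup>2) \<le> (\<Sum>x\<in>UNIV. pmf q x)"
  proof (rule sum_mono)
    fix x
    have "pmf q x * pmf q x \<le> pmf q x * 1" by (intro mult_left_mono pmf_le_1 pmf_nonneg)
    then show "(pmf q x)\<^sup>2 \<le> pmf q x" by (simp add: power2_eq_square)
  qed
  also have "\<dots> = 1" by (rule sum_pmf_eq_1) auto
  finally show ?thesis .
qed

lemma part_c: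
  fixes s :: "nat \<times> nat \<Rightarrow> 'x::finite" and pol :: "nat \<Rightarrow> nat \<Rightarrow> 'x \<Rightarrow> ('x \<Rightarrow> real) \<Rightarrow> 'u::finite pmf"
    and P :: "nat \<Rightarrow> 'x \<Rightarrow> 'u \<Rightarrow> ('x \<Rightarrow> real) \<Rightarrow> ('u \<Rightarrow> real) \<Rightarrow> 'x pmf"
  assumes n: "Npop K N > 0" and LP: "L_P > 0"
    and P_lip: "\<forall>k<K. \<forall>x u mu1 nu1 mu2 nu2.
        is_dist mu1 \<longrightarrow> is_dist nu1 \<longrightarrow> is_dist mu2 \<longrightarrow> is_dist nu2 \<longrightarrow>
        l1 (pmf (P k x u mu1 nu1)) (pmf (P k x u mu2 nu2)) \<le> L_P * (l1 mu1 mu2 + l1 nu1 nu2)"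
  shows "measure_pmf.expectation (bind_pmf (act_pmf K N pol t s) (\<lambda>a. map_pmf (\<lambda>s'. (s, a, s')) (next_pmf K N P s a)))
       (\<lambda>(s, a, s'). l1 (marg K (emp K N s')) (marg K (PMF K P (pol t) (emp K N s))))
      \<le> (2 + L_P) / sqrt (real (Npop K N)) * sqrt (real CARD('x) * real CARD('u))"
proof -
  define A where "A = agents K N"
  define m where "m = marg K (emp K N s)"
  define nM where "nM = marg K (nuMF K (pol t) (emp K N s))"
  define p where "p i = pol t (fst i) (s i) m" for i
  define nn where "nn = real (Npop K N)"
  define Q where "Q = marg K (PMF K P (pol t) (emp K N s))"
  define q where "q a i = P (fst i) (s i) (a i) m (marg K (emp K N a))" for a :: "nat \<times> nat \<Rightarrow> 'u" and i
  define h where "h i b x' = pmf (P (fst i) (s i) b m nM) x'" for i b x'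
  define R1 where "R1 a = (\<lambda>x'. (\<Sum>i\<in>A. measure_pmf.expectation (q a i) (\<lambda>b. (\<lambda>i b x'. if b = x' then 1 else 0) i b x')) / real (card A))" for a
  define R2 where "R2 a = (\<lambda>x'. (\<Sum>i\<in>A. h i (a i) x') / real (card A))" for a :: "nat \<times> nat \<Rightarrow> 'u"
  define c where "c = 1 / sqrt nn * sqrt (real CARD('x))"
  have nn: "nn > 0" using n by (simp add: nn_def)
  have cardA: "real (card A) = nn" by (simp add: A_def nn_def card_agents)
  have cardA0: "card A > 0" using n by (simp add: A_def card_agents)
  have finA: "finite A" by (simp add: A_def fin_agents)
  have dm: "is_dist m" unfolding m_def by (rule dist_emp[OF n])
  have dM: "is_dist nM" unfolding nM_def by (rule dist_nuMF[OF n])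
  have de: "is_dist (marg K (emp K N a))" for a :: "nat \<times> nat \<Rightarrow> 'u" by (rule dist_emp[OF n])
  have fstA: "i \<in> A \<Longrightarrow> fst i < K" for i by (simp add: A_def fst_agents)
  have act: "act_pmf K N pol t s = Pi_pmf A undefined p"
    unfolding act_eq A_def p_def m_def ..
  have nxt: "next_pmf K N P s a = Pi_pmf A undefined (q a)" for a
    unfolding next_eq A_def q_def m_def ..
  have finAct: "finite (set_pmf (Pi_pmf A undefined p))" by (rule fin_Pi[OF finA])
  have finNxt: "finite (set_pmf (Pi_pmf A undefined (q a)))" for a by (rule fin_Pi[OF finA])
  have Qeq: "Q = (\<lambda>x'. (\<Sum>i\<in>A. measure_pmf.expectation (p i) (\<lambda>b. h i b x')) / real (card A))"
    by (simp add: fun_eq_iff Q_def marg_PMF exp_fin card_agents A_def p_def h_def m_def nM_def)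
  have mu': "marg K (emp K N s') = (\<lambda>x'. (\<Sum>i\<in>A. (\<lambda>i b x'. if b = x' then 1 else 0) i (s' i) x') / real (card A))"
    for s' :: "nat \<times> nat \<Rightarrow> 'x"
    by (simp add: fun_eq_iff marg_emp card_agents A_def)
  have step1: "measure_pmf.expectation (bind_pmf (act_pmf K N pol t s) (\<lambda>a. map_pmf (\<lambda>s'. (s, a, s')) (next_pmf K N P s a)))
       (\<lambda>(s, a, s'). l1 (marg K (emp K N s')) (marg K (PMF K P (pol t) (emp K N s))))
     = measure_pmf.expectation (Pi_pmf A undefined p)
        (\<lambda>a. measure_pmf.expectation (Pi_pmf A undefined (q a)) (\<lambda>s'. l1 (marg K (emp K N s')) Q))"
    unfolding act nxt Q_def
    by (subst exp_bind_finite) (auto simp: finAct finNxt)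
  have R12: "l1 (R1 a) (R2 a) \<le> L_P * l1 (marg K (emp K N a)) nM" for a
  proof -
    define T where "T = (\<Sum>x'\<in>UNIV. \<bar>\<Sum>i\<in>A. (pmf (q a i) x' - h i (a i) x')\<bar>)"
    have eq1: "l1 (R1 a) (R2 a) = T / nn"
      unfolding l1_def R1_def R2_def cardA T_def using nn
      by (simp add: exp_ind sum_divide_distrib[symmetric] diff_divide_distrib[symmetric] sum_subtractf)
    have "T \<le> (\<Sum>x'\<in>UNIV. \<Sum>i\<in>A. \<bar>pmf (q a i) x' - h i (a i) x'\<bar>)"
      unfolding T_def by (intro sum_mono sum_abs)
    also have "(\<Sum>x'\<in>UNIV. \<Sum>i\<in>A. \<bar>pmf (q a i) x' - h i (a i) x'\<bar>) = (\<Sum>i\<in>A. l1 (pmf (q a i)) (pmf (P (fst i) (s i) (a i) m nM)))"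
      unfolding l1_def h_def by (rule sum.swap)
    also have "\<dots> \<le> (\<Sum>i\<in>A. L_P * l1 (marg K (emp K N a)) nM)"
    proof (rule sum_mono)
      fix i assume i: "i \<in> A"
      have "l1 (pmf (q a i)) (pmf (P (fst i) (s i) (a i) m nM)) \<le> L_P * (l1 m m + l1 (marg K (emp K N a)) nM)"
        unfolding q_def by (rule P_lip[rule_format, OF fstA[OF i] dm de dm dM])
      then show "l1 (pmf (q a i)) (pmf (P (fst i) (s i) (a i) m nM)) \<le> L_P * l1 (marg K (emp K N a)) nM" by simp
    qed
    also have "\<dots> = (L_P * l1 (marg K (emp K N a)) nM) * nn" using cardA by simp
    finally have "T \<le> (L_P * l1 (marg K (emp K N a)) nM) * nn" .
    then show ?thesis unfolding eq1 by (simp add: pos_divide_le_eq[OF nn])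
  qed
  have step2: "measure_pmf.expectation (Pi_pmf A undefined (q a)) (\<lambda>s'. l1 (marg K (emp K N s')) Q)
      \<le> c + L_P * l1 (marg K (emp K N a)) nM + l1 (R2 a) Q" for a
  proof -
    have "measure_pmf.expectation (Pi_pmf A undefined (q a)) (\<lambda>s'. l1 (marg K (emp K N s')) Q)
       \<le> measure_pmf.expectation (Pi_pmf A undefined (q a)) (\<lambda>s'. l1 (marg K (emp K N s')) (R1 a) + (l1 (R1 a) (R2 a) + l1 (R2 a) Q))"
    proof (rule Bochner_Integration.integral_mono)
      fix s'
      show "l1 (marg K (emp K N s')) Q \<le> l1 (marg K (emp K N s')) (R1 a) + (l1 (R1 a) (R2 a) + l1 (R2 a) Q)"
        using l1_triangle[of "marg K (emp K N s')" Q "R1 a"] l1_triangle[of "R1 a" Q "R2 a"] by linarith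
    qed (auto simp: int_fin finNxt)
    also have "\<dots> = measure_pmf.expectation (Pi_pmf A undefined (q a)) (\<lambda>s'. l1 (marg K (emp K N s')) (R1 a))
        + (l1 (R1 a) (R2 a) + l1 (R2 a) Q)"
      by (simp add: int_fin finNxt)
    also have "measure_pmf.expectation (Pi_pmf A undefined (q a)) (\<lambda>s'. l1 (marg K (emp K N s')) (R1 a)) \<le> c"
      unfolding mu' R1_def c_def cardA[symmetric]
      by (rule Gl1[OF finA cardA0]) (simp add: sum_ind_sq)
    finally show ?thesis using R12[of a] by linarith
  qed
  have EA: "measure_pmf.expectation (Pi_pmf A undefined p) (\<lambda>a. l1 (marg K (emp K N a)) nM)
      \<le> 1 / sqrt nn * sqrt (real CARD('u))"
    using part_a[OF n, of pol t s] unfolding act nM_def nn_def .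
  have ER2: "measure_pmf.expectation (Pi_pmf A undefined p) (\<lambda>a. l1 (R2 a) Q) \<le> c"
    unfolding R2_def Qeq c_def cardA[symmetric]
    by (rule Gl1[OF finA cardA0]) (simp add: h_def pmf_sq_sum)
  have "measure_pmf.expectation (Pi_pmf A undefined p)
        (\<lambda>a. measure_pmf.expectation (Pi_pmf A undefined (q a)) (\<lambda>s'. l1 (marg K (emp K N s')) Q))
      \<le> measure_pmf.expectation (Pi_pmf A undefined p)
        (\<lambda>a. c + L_P * l1 (marg K (emp K N a)) nM + l1 (R2 a) Q)"
    by (rule Bochner_Integration.integral_mono) (auto simp: int_fin finAct step2)
  also have "\<dots> = c + L_P * measure_pmf.expectation (Pi_pmf A undefined p) (\<lambda>a. l1 (marg K (emp K N a)) nM)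
        + measure_pmf.expectation (Pi_pmf A undefined p) (\<lambda>a. l1 (R2 a) Q)"
    by (simp add: int_fin finAct)
  also have "\<dots> \<le> c + L_P * (1 / sqrt nn * sqrt (real CARD('u))) + c"
    using EA ER2 LP by (intro add_mono mult_left_mono) auto
  also have "\<dots> \<le> (2 + L_P) / sqrt nn * sqrt (real CARD('x) * real CARD('u))"
  proof -
    have x: "sqrt (real CARD('x)) \<le> sqrt (real CARD('x) * real CARD('u))"
      by (rule real_sqrt_le_mono) simp
    have u: "sqrt (real CARD('u)) \<le> sqrt (real CARD('x) * real CARD('u))"
      by (rule real_sqrt_le_mono) simp
    have ip: "0 \<le> 1 / sqrt nn" using nn by simp
    have "c + L_P * (1 / sqrt nn * sqrt (real CARD('u))) + c
        = 1 / sqrt nn * (2 * sqrt (real CARD('x)) + L_P * sqrt (real CARD('u)))"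
      unfolding c_def by (simp add: algebra_simps)
    also have "\<dots> \<le> 1 / sqrt nn * (2 * sqrt (real CARD('x) * real CARD('u)) + L_P * sqrt (real CARD('x) * real CARD('u)))"
      using x u LP ip by (intro mult_left_mono add_mono) auto
    also have "\<dots> = (2 + L_P) / sqrt nn * sqrt (real CARD('x) * real CARD('u))"
      by (simp add: algebra_simps add_divide_distrib)
    finally show ?thesis .
  qed
  finally show ?thesis unfolding step1 nn_def .
qed



lemma fin_inner:
  fixes s :: "nat \<times> nat \<Rightarrow> 'x::finite" and pol :: "nat \<Rightarrow> nat \<Rightarrow> 'x \<Rightarrow> ('x \<Rightarrow> real) \<Rightarrow> 'u::finite pmf"
  shows "finite (set_pmf (bind_pmf (act_pmf K N pol t s) (\<lambda>a. map_pmf (\<lambda>s'. (s, a, s')) (next_pmf K N P s a))))"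
  unfolding act_eq next_eq by (auto intro!: fin_Pi fin_agents)

lemma inner_const:
  fixes s :: "nat \<times> nat \<Rightarrow> 'x::finite" and pol :: "nat \<Rightarrow> nat \<Rightarrow> 'x \<Rightarrow> ('x \<Rightarrow> real) \<Rightarrow> 'u::finite pmf"
  shows "measure_pmf.expectation (bind_pmf (act_pmf K N pol t s) (\<lambda>a. map_pmf (\<lambda>s'. (s, a, s')) (next_pmf K N P s a)))
      (\<lambda>(s, a, s'). (H :: _ \<Rightarrow> _ \<Rightarrow> real) s a) = measure_pmf.expectation (act_pmf K N pol t s) (\<lambda>a. H s a)"
  unfolding act_eq next_eq by (subst exp_bind_finite) (auto intro!: fin_Pi fin_agents)

theorem lemma12:
  fixes K :: nat and N :: "nat \<Rightarrow> nat" and M_R L_R L_P :: real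
    and r :: "nat \<Rightarrow> 'x::finite \<Rightarrow> 'u::finite \<Rightarrow> ('x \<Rightarrow> real) \<Rightarrow> ('u \<Rightarrow> real) \<Rightarrow> real"
    and P :: "nat \<Rightarrow> 'x \<Rightarrow> 'u \<Rightarrow> ('x \<Rightarrow> real) \<Rightarrow> ('u \<Rightarrow> real) \<Rightarrow> 'x pmf"
    and pol :: "nat \<Rightarrow> nat \<Rightarrow> 'x \<Rightarrow> ('x \<Rightarrow> real) \<Rightarrow> 'u pmf"
    and init :: "(nat \<times> nat \<Rightarrow> 'x) pmf"
    and t :: nat
  assumes K_pos: "K \<ge> 1"
    and N_pos: "\<forall>k<K. N k \<ge> 1"
    and M_R_pos: "M_R > 0" and L_R_pos: "L_R > 0" and L_P_pos: "L_P > 0"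
    and r_bound: "\<forall>k<K. \<forall>x u mu nu. is_dist mu \<longrightarrow> is_dist nu \<longrightarrow> \<bar>r k x u mu nu\<bar> \<le> M_R"
    and r_lip: "\<forall>k<K. \<forall>x u mu1 nu1 mu2 nu2.
        is_dist mu1 \<longrightarrow> is_dist nu1 \<longrightarrow> is_dist mu2 \<longrightarrow> is_dist nu2 \<longrightarrow>
        \<bar>r k x u mu1 nu1 - r k x u mu2 nu2\<bar> \<le> L_R * (l1 mu1 mu2 + l1 nu1 nu2)"
    and P_lip: "\<forall>k<K. \<forall>x u mu1 nu1 mu2 nu2.
        is_dist mu1 \<longrightarrow> is_dist nu1 \<longrightarrow> is_dist mu2 \<longrightarrow> is_dist nu2 \<longrightarrow>
        l1 (pmf (P k x u mu1 nu1)) (pmf (P k x u mu2 nu2)) \<le> L_P * (l1 mu1 mu2 + l1 nu1 nu2)"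
  shows
   "measure_pmf.expectation (joint_pmf K N P pol init t)
       (\<lambda>(s, a, s'). l1 (marg K (emp K N a)) (marg K (nuMF K (pol t) (emp K N s))))
      \<le> 1 / sqrt (real (Npop K N)) * sqrt (real CARD('u))
    \<and> measure_pmf.expectation (joint_pmf K N P pol init t)
       (\<lambda>(s, a, s'). \<bar>1 / real (Npop K N) *
            (\<Sum>(k, j)\<in>agents K N. r k (s (k, j)) (a (k, j)) (marg K (emp K N s)) (marg K (emp K N a)))
          - (\<Sum>k<K. rMF K r (pol t) (emp K N s) k)\<bar>)
      \<le> (M_R + L_R) / sqrt (real (Npop K N)) * sqrt (real CARD('u))
    \<and> measure_pmf.expectation (joint_pmf K N P pol init t)
       (\<lambda>(s, a, s'). l1 (marg K (emp K N s')) (marg K (PMF K P (pol t) (emp K N s))))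
      \<le> (2 + L_P) / sqrt (real (Npop K N)) * sqrt (real CARD('x) * real CARD('u))"
proof -
  have n: "Npop K N > 0"
  proof -
    have "N 0 \<le> (\<Sum>k<K. N k)" using K_pos by (intro member_le_sum) auto
    then show ?thesis using N_pos K_pos unfolding Npop_def by fastforce
  qed
  have J: "joint_pmf K N P pol init t = bind_pmf (state_pmf K N P pol init t)
      (\<lambda>s. bind_pmf (act_pmf K N pol t s) (\<lambda>a. map_pmf (\<lambda>s'. (s, a, s')) (next_pmf K N P s a)))"
    by (simp add: joint_pmf_def)
  show ?thesis
    unfolding J
  proof (intro conjI)
    show "measure_pmf.expectation (bind_pmf (state_pmf K N P pol init t)
      (\<lambda>s. bind_pmf (act_pmf K N pol t s) (\<lambda>a. map_pmf (\<lambda>s'. (s, a, s')) (next_pmf K N P s a))))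
       (\<lambda>(s, a, s'). l1 (marg K (emp K N a)) (marg K (nuMF K (pol t) (emp K N s))))
      \<le> 1 / sqrt (real (Npop K N)) * sqrt (real CARD('u))"
    proof (rule exp_bind_le)
      fix x show "measure_pmf.expectation (bind_pmf (act_pmf K N pol t x) (\<lambda>a. map_pmf (\<lambda>s'. (x, a, s')) (next_pmf K N P x a)))
       (\<lambda>(s, a, s'). l1 (marg K (emp K N a)) (marg K (nuMF K (pol t) (emp K N s))))
      \<le> 1 / sqrt (real (Npop K N)) * sqrt (real CARD('u))"
        unfolding inner_const by (rule part_a[OF n])
    qed (auto simp: l1_nonneg intro!: int_fin[OF fin_inner])
    show "measure_pmf.expectation (bind_pmf (state_pmf K N P pol init t)
      (\<lambda>s. bind_pmf (act_pmf K N pol t s) (\<lambda>a. map_pmf (\<lambda>s'. (s, a, s')) (next_pmf K N P s a))))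
       (\<lambda>(s, a, s'). \<bar>1 / real (Npop K N) *
            (\<Sum>(k, j)\<in>agents K N. r k (s (k, j)) (a (k, j)) (marg K (emp K N s)) (marg K (emp K N a)))
          - (\<Sum>k<K. rMF K r (pol t) (emp K N s) k)\<bar>)
      \<le> (M_R + L_R) / sqrt (real (Npop K N)) * sqrt (real CARD('u))"
    proof (rule exp_bind_le)
      fix x show "measure_pmf.expectation (bind_pmf (act_pmf K N pol t x) (\<lambda>a. map_pmf (\<lambda>s'. (x, a, s')) (next_pmf K N P x a)))
       (\<lambda>(s, a, s'). \<bar>1 / real (Npop K N) *
            (\<Sum>(k, j)\<in>agents K N. r k (s (k, j)) (a (k, j)) (marg K (emp K N s)) (marg K (emp K N a)))
          - (\<Sum>k<K. rMF K r (pol t) (emp K N s) k)\<bar>)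
      \<le> (M_R + L_R) / sqrt (real (Npop K N)) * sqrt (real CARD('u))"
        unfolding inner_const by (rule part_b[OF n L_R_pos M_R_pos r_bound r_lip])
    qed (auto intro!: int_fin[OF fin_inner])
    show "measure_pmf.expectation (bind_pmf (state_pmf K N P pol init t)
      (\<lambda>s. bind_pmf (act_pmf K N pol t s) (\<lambda>a. map_pmf (\<lambda>s'. (s, a, s')) (next_pmf K N P s a))))
       (\<lambda>(s, a, s'). l1 (marg K (emp K N s')) (marg K (PMF K P (pol t) (emp K N s))))
      \<le> (2 + L_P) / sqrt (real (Npop K N)) * sqrt (real CARD('x) * real CARD('u))"
    proof (rule exp_bind_le)
      fix x show "measure_pmf.expectation (bind_pmf (act_pmf K N pol t x) (\<lambda>a. map_pmf (\<lambda>s'. (x, a, s')) (next_pmf K N P x a)))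
       (\<lambda>(s, a, s'). l1 (marg K (emp K N s')) (marg K (PMF K P (pol t) (emp K N s))))
      \<le> (2 + L_P) / sqrt (real (Npop K N)) * sqrt (real CARD('x) * real CARD('u))"
        by (rule part_c[OF n L_P_pos P_lip])
    qed (auto simp: l1_nonneg intro!: int_fin[OF fin_inner])
  qed
qed

end
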